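(* For any finite simple graph $G$, $\mathrm{mur}(G)=\mathrm{mur}(\overline{G})$, where $\overline{G}$ is the complement of $G$.
   Context: For a finite simple undirected graph $G$ on vertices $v_1,\dots,v_n$, let $A_G$ be its $(0,1)$-adjacency matrix, $D_G=\mathrm{diag}(d_1,\dots,d_n)$ with $d_i$ the degree of $v_i$, $I$ the $n\times n$ identity matrix and $J$ the $n\times n$ all-ones matrix. A universal adjacency matrix of $G$ is any matrix $\alpha A_G+\beta I+\gamma J+\delta D_G$ with real scalars $\alpha,\beta,\gamma,\delta$ and $\alpha\neq 0$. The minimum universal rank $\mathrm{mur}(G)$ is the minimum rank over all universal adjacency matrices of $G$. *)

theory Defs
  imports "HOL-Analysis.Analysis"
begin

definition simple_graph :: "('n::finite \<Rightarrow> 'n \<Rightarrow> bool) \<Rightarrow> bool" where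
  "simple_graph E \<longleftrightarrow> (\<forall>u v. E u v \<longrightarrow> E v u) \<and> (\<forall>v. \<not> E v v)"

definition complement_graph :: "('n::finite \<Rightarrow> 'n \<Rightarrow> bool) \<Rightarrow> 'n \<Rightarrow> 'n \<Rightarrow> bool" where
  "complement_graph E = (\<lambda>u v. u \<noteq> v \<and> \<not> E u v)"

definition adj_matrix :: "('n::finite \<Rightarrow> 'n \<Rightarrow> bool) \<Rightarrow> real^'n^'n" where
  "adj_matrix E = (\<chi> i j. if E i j then 1 else 0)"

definition degree :: "('n::finite \<Rightarrow> 'n \<Rightarrow> bool) \<Rightarrow> 'n \<Rightarrow> nat" where
  "degree E v = card {u. E v u}"

definition degree_matrix :: "('n::finite \<Rightarrow> 'n \<Rightarrow> bool) \<Rightarrow> real^'n^'n" where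
  "degree_matrix E = (\<chi> i j. if i = j then real (degree E i) else 0)"

definition ones_matrix :: "real^'n^'n" where
  "ones_matrix = (\<chi> i j. 1)"

definition universal_adj :: "('n::finite \<Rightarrow> 'n \<Rightarrow> bool) \<Rightarrow> real \<Rightarrow> real \<Rightarrow> real \<Rightarrow> real \<Rightarrow> real^'n^'n" where
  "universal_adj E \<alpha> \<beta> \<gamma> \<delta> =
     \<alpha> *\<^sub>R adj_matrix E + \<beta> *\<^sub>R mat 1 + \<gamma> *\<^sub>R ones_matrix + \<delta> *\<^sub>R degree_matrix E"

definition mur :: "('n::finite \<Rightarrow> 'n \<Rightarrow> bool) \<Rightarrow> nat" where
  "mur E = Min {rank (universal_adj E \<alpha> \<beta> \<gamma> \<delta>) | \<alpha> \<beta> \<gamma> \<delta>. \<alpha> \<noteq> 0}"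

end

theory Submission
  imports Defs
begin

lemma deg_compl:
  fixes E :: "'n::finite \<Rightarrow> 'n \<Rightarrow> bool"
  assumes "simple_graph E"
  shows "real (degree (complement_graph E) v) = real CARD('n) - 1 - real (degree E v)"
proof -
  have s: "{u. complement_graph E v u} = (UNIV - {v}) - {u. E v u}"
    by (auto simp: complement_graph_def)
  have sub: "{u. E v u} \<subseteq> UNIV - {v}" using assms by (auto simp: simple_graph_def)
  have "card {u. complement_graph E v u} = card (UNIV - {v} :: 'n set) - card {u. E v u}"
    unfolding s by (rule card_Diff_subset) (use sub in auto)
  moreover have "card (UNIV - {v} :: 'n set) = CARD('n) - 1" by (simp add: card_Diff_singleton)
  moreover have "card {u. E v u} \<le> CARD('n) - 1"
    using card_mono[OF _ sub] \<open>card (UNIV - {v} :: 'n set) = CARD('n) - 1\<close> by simp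
  moreover have "CARD('n) \<ge> 1" by (simp add: Suc_leI)
  ultimately have "card {u. complement_graph E v u} + card {u. E v u} + 1 = CARD('n)" by linarith
  hence "real (card {u. complement_graph E v u}) + real (card {u. E v u}) + 1 = real CARD('n)"
    by (metis of_nat_1 of_nat_add)
  thus ?thesis unfolding degree_def by linarith
qed

lemma key:
  fixes E :: "'n::finite \<Rightarrow> 'n \<Rightarrow> bool"
  assumes "simple_graph E"
  shows "universal_adj (complement_graph E) a b c d =
         universal_adj E (-a) (b - a + d * (real CARD('n) - 1)) (c + a) (-d)"
  using assms deg_compl[OF assms]
  by (auto simp: vec_eq_iff universal_adj_def adj_matrix_def degree_matrix_def ones_matrix_def
      mat_def simple_graph_def algebra_simps, auto simp: complement_graph_def algebra_simps, metis distrib_left mult.right_neutral)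

lemma compl_simple: "simple_graph E \<Longrightarrow> simple_graph (complement_graph E)"
  by (auto simp: simple_graph_def complement_graph_def)

lemma compl_compl: "simple_graph E \<Longrightarrow> complement_graph (complement_graph E) = E"
  by (auto simp: simple_graph_def complement_graph_def fun_eq_iff)

lemma sub:
  fixes E :: "'n::finite \<Rightarrow> 'n \<Rightarrow> bool"
  assumes "simple_graph E"
  shows "{rank (universal_adj (complement_graph E) \<alpha> \<beta> \<gamma> \<delta>) | \<alpha> \<beta> \<gamma> \<delta>. \<alpha> \<noteq> 0}
     \<subseteq> {rank (universal_adj E \<alpha> \<beta> \<gamma> \<delta>) | \<alpha> \<beta> \<gamma> \<delta>. \<alpha> \<noteq> 0}"
proof
  fix x assume "x \<in> {rank (universal_adj (complement_graph E) \<alpha> \<beta> \<gamma> \<delta>) | \<alpha> \<beta> \<gamma> \<delta>. \<alpha> \<noteq> 0}"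
  then obtain a b c d where "a \<noteq> 0" "x = rank (universal_adj (complement_graph E) a b c d)" by blast
  then show "x \<in> {rank (universal_adj E \<alpha> \<beta> \<gamma> \<delta>) | \<alpha> \<beta> \<gamma> \<delta>. \<alpha> \<noteq> 0}"
    unfolding key[OF assms]
    by (intro CollectI exI[of _ "-a"] exI[of _ "b - a + d * (real CARD('n) - 1)"]
        exI[of _ "c + a"] exI[of _ "-d"]) simp
qed

theorem lemma1:
  fixes E :: "'n::finite \<Rightarrow> 'n \<Rightarrow> bool"
  assumes "simple_graph E"
  shows "mur E = mur (complement_graph E)"
proof -
  have "{rank (universal_adj (complement_graph E) \<alpha> \<beta> \<gamma> \<delta>) | \<alpha> \<beta> \<gamma> \<delta>. \<alpha> \<noteq> 0}
     = {rank (universal_adj E \<alpha> \<beta> \<gamma> \<delta>) | \<alpha> \<beta> \<gamma> \<delta>. \<alpha> \<noteq> 0}"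
    using sub[OF assms] sub[OF compl_simple[OF assms]] compl_compl[OF assms] by auto
  then show ?thesis unfolding mur_def by simp
qed

end
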